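(* A connected finite simple graph $G$ is zero--M--cordial if and only if $G$ is Eulerian (every vertex has even degree) and $G$ has an even number of edges.
   Context: A labeling of a graph $G$ is a map $f:E(G)\to\{-1,+1\}$; for each vertex $v$ set $f(v)=\sum_{e\in I(v)} f(e)$, where $I(v)$ is the set of edges incident to $v$. A labeling $f$ is zero--M--cordial if $f(v)=0$ for every vertex $v$. A graph is zero--M--cordial if it admits a zero--M--cordial labeling. *)

theory Defs
  imports Main
begin

definition simple_graph :: "'a set \<Rightarrow> 'a set set \<Rightarrow> bool" where
  "simple_graph V E \<longleftrightarrow> finite V \<and>
     (\<forall>e\<in>E. \<exists>u v. e = {u, v} \<and> u \<noteq> v \<and> u \<in> V \<and> v \<in> V)"

definition incident_edges :: "'a set set \<Rightarrow> 'a \<Rightarrow> 'a set set" where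
  "incident_edges E v = {e \<in> E. v \<in> e}"

definition degree :: "'a set set \<Rightarrow> 'a \<Rightarrow> nat" where
  "degree E v = card (incident_edges E v)"

definition adj_rel :: "'a set set \<Rightarrow> ('a \<times> 'a) set" where
  "adj_rel E = {(u, v). {u, v} \<in> E}"

definition connected_graph :: "'a set \<Rightarrow> 'a set set \<Rightarrow> bool" where
  "connected_graph V E \<longleftrightarrow> (\<forall>u\<in>V. \<forall>v\<in>V. (u, v) \<in> (adj_rel E)\<^sup>*)"

definition labeling :: "'a set set \<Rightarrow> ('a set \<Rightarrow> int) \<Rightarrow> bool" where
  "labeling E f \<longleftrightarrow> (\<forall>e\<in>E. f e = -1 \<or> f e = 1)"

definition vertex_label :: "'a set set \<Rightarrow> ('a set \<Rightarrow> int) \<Rightarrow> 'a \<Rightarrow> int" where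
  "vertex_label E f v = (\<Sum>e\<in>incident_edges E v. f e)"

definition zero_M_cordial_labeling :: "'a set \<Rightarrow> 'a set set \<Rightarrow> ('a set \<Rightarrow> int) \<Rightarrow> bool" where
  "zero_M_cordial_labeling V E f \<longleftrightarrow> labeling E f \<and> (\<forall>v\<in>V. vertex_label E f v = 0)"

definition zero_M_cordial :: "'a set \<Rightarrow> 'a set set \<Rightarrow> bool" where
  "zero_M_cordial V E \<longleftrightarrow> (\<exists>f. zero_M_cordial_labeling V E f)"

definition eulerian :: "'a set \<Rightarrow> 'a set set \<Rightarrow> bool" where
  "eulerian V E \<longleftrightarrow> (\<forall>v\<in>V. even (degree E v))"

end

theory Submission
  imports Defs
begin

lemma pm1_sum_parity:
  assumes "finite A" "\<forall>e\<in>A. f e = -1 \<or> f e = (1::int)"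
  shows "even (sum f A) \<longleftrightarrow> even (card A)"
  using assms
proof (induction A rule: finite_induct)
  case empty then show ?case by simp
next
  case (insert a A)
  then have "f a = -1 \<or> f a = 1" by simp
  with insert show ?case by auto
qed

lemma vl_parity:
  assumes "finite E" "labeling E f"
  shows "even (vertex_label E f v) \<longleftrightarrow> even (degree E v)"
  unfolding vertex_label_def degree_def
  apply (rule pm1_sum_parity)
  using assms by (auto simp: incident_edges_def labeling_def)

lemma adj_conv: "(adj_rel E)\<inverse> = adj_rel E"
  by (auto simp: adj_rel_def insert_commute)

lemma rtc_sym: "(u,v) \<in> (adj_rel E)\<^sup>* \<Longrightarrow> (v,u) \<in> (adj_rel E)\<^sup>*"
  by (metis adj_conv rtrancl_converseI)

lemma reach_decomp:
  assumes "(v,w) \<in> (adj_rel E)\<^sup>*"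
  shows "(v,w) \<in> (adj_rel (E - {{x,y}}))\<^sup>* \<or> (v,x) \<in> (adj_rel (E - {{x,y}}))\<^sup>*
     \<or> (v,y) \<in> (adj_rel (E - {{x,y}}))\<^sup>*"
  using assms
proof (induction rule: rtrancl_induct)
  case base then show ?case by simp
next
  case (step z w)
  show ?case
  proof (cases "{z,w} = {x,y}")
    case True
    then have "z = x \<or> z = y" by (metis doubleton_eq_iff)
    with step.IH show ?thesis by auto
  next
    case False
    then have "(z,w) \<in> adj_rel (E - {{x,y}})" using step.hyps(2) by (auto simp: adj_rel_def)
    with step.IH show ?thesis by (meson rtrancl.rtrancl_into_rtrancl)
  qed
qed

lemma inc_remove: "e \<in> E \<Longrightarrow> incident_edges E v =
  (if v \<in> e then insert e (incident_edges (E - {e}) v) else incident_edges (E - {e}) v)"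
  by (auto simp: incident_edges_def)

lemma vl_remove:
  assumes "finite E" "e \<in> E"
  shows "vertex_label E (f'(e := s)) v = vertex_label (E - {e}) f' v + (if v \<in> e then s else 0)"
proof -
  have fin: "finite (incident_edges (E - {e}) v)" using assms(1) by (auto simp: incident_edges_def)
  have nin: "e \<notin> incident_edges (E - {e}) v" by (auto simp: incident_edges_def)
  have eq: "(\<Sum>e'\<in>incident_edges (E - {e}) v. (f'(e := s)) e') = (\<Sum>e'\<in>incident_edges (E - {e}) v. f' e')"
    by (rule sum.cong) (auto simp: incident_edges_def)
  show ?thesis
    unfolding vertex_label_def
    using inc_remove[OF assms(2), of v] fin nin eq by (auto simp: sum.insert)
qed

lemma deg_remove:
  assumes "finite E" "e \<in> E"
  shows "degree E v = degree (E - {e}) v + (if v \<in> e then 1 else 0)"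
proof -
  have fin: "finite (incident_edges (E - {e}) v)" using assms(1) by (auto simp: incident_edges_def)
  have nin: "e \<notin> incident_edges (E - {e}) v" by (auto simp: incident_edges_def)
  show ?thesis unfolding degree_def using inc_remove[OF assms(2), of v] fin nin by auto
qed

lemma flip_vl:
  assumes "\<forall>e\<in>E. \<exists>u w. e = {u,w} \<and> u \<noteq> w"
    and "\<forall>u w. u \<in> R \<longrightarrow> {u,w} \<in> E \<longrightarrow> w \<in> R"
  shows "vertex_label E (\<lambda>e. if e \<subseteq> R then - f e else f e) v =
         (if v \<in> R then - vertex_label E f v else vertex_label E f v)"
proof (cases "v \<in> R")
  case True
  have "\<forall>e\<in>incident_edges E v. e \<subseteq> R"
  proof
    fix e assume "e \<in> incident_edges E v"
    then have e: "e \<in> E" "v \<in> e" by (auto simp: incident_edges_def)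
    then obtain u w where uw: "e = {u,w}" using assms(1) by blast
    then obtain z where "e = {v,z}" using e(2) by (auto simp: insert_commute)
    then show "e \<subseteq> R" using assms(2) True e(1) by auto
  qed
  then show ?thesis using True unfolding vertex_label_def
    by (simp add: sum_negf[symmetric])
next
  case False
  have "\<forall>e\<in>incident_edges E v. \<not> e \<subseteq> R" using False by (auto simp: incident_edges_def)
  then show ?thesis using False unfolding vertex_label_def by simp
qed


lemma rtc_last: "(u,w) \<in> r\<^sup>* \<Longrightarrow> u \<noteq> w \<Longrightarrow> \<exists>z. (z,w) \<in> r"
  by (metis rtranclE)

lemma main:
  "finite E \<Longrightarrow> (\<forall>e\<in>E. \<exists>u w. e = {u,w} \<and> u \<noteq> w) \<Longrightarrow> (\<forall>v. h v \<le> 2) \<Longrightarrow>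
   (\<forall>v. odd (h v) \<longleftrightarrow> odd (degree E v)) \<Longrightarrow>
   (\<forall>u v. {u,v} \<in> E \<longrightarrow> (\<exists>w. (u,w) \<in> (adj_rel E)\<^sup>* \<and> h w > 0)) \<Longrightarrow>
   \<exists>f. labeling E f \<and> (\<forall>v. \<bar>vertex_label E f v\<bar> \<le> int (h v))"
proof (induction "card E" arbitrary: E h rule: less_induct)
  case less
  note fin = less.prems(1) and simp = less.prems(2) and hle = less.prems(3)
    and hpar = less.prems(4) and C = less.prems(5)
  show ?case
  proof (cases "E = {}")
    case True
    then show ?thesis
      by (intro exI[of _ "\<lambda>_. 1"]) (simp add: labeling_def vertex_label_def incident_edges_def)
  next
    case False
    then obtain e0 where "e0 \<in> E" by blast
    then obtain u0 v0 where uv0: "e0 = {u0,v0}" "u0 \<noteq> v0" using simp by blast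
    then have uv0E: "{u0,v0} \<in> E" using \<open>e0 \<in> E\<close> by simp
    then obtain w0 where w0: "(u0,w0) \<in> (adj_rel E)\<^sup>*" "h w0 > 0" using C by blast
    obtain x y where xy: "{x,y} \<in> E" "x \<noteq> y" "h x > 0"
    proof (cases "u0 = w0")
      case True then show ?thesis using that uv0 uv0E w0 by metis
    next
      case False
      then obtain z where "(z,w0) \<in> adj_rel E" using rtc_last w0(1) by metis
      then have zE: "{w0,z} \<in> E" by (simp add: adj_rel_def insert_commute)
      then obtain a b where ab: "{w0,z} = {a,b}" "a \<noteq> b" using simp by metis
      then have "w0 \<noteq> z" by (metis insert_absorb2 doubleton_eq_iff)
      then show ?thesis using that w0 zE by metis
    qed
    define e where "e = {x,y}"
    define E' where "E' = E - {e}"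
    have eE: "e \<in> E" using xy e_def by simp
    have cardlt: "card E' < card E" unfolding E'_def using fin eE by (metis card_Diff1_less)
    have fin': "finite E'" using fin E'_def by simp
    have simp': "\<forall>e\<in>E'. \<exists>u w. e = {u,w} \<and> u \<noteq> w" using simp E'_def by simp
    have degs: "\<And>v. degree E v = degree E' v + (if v \<in> e then 1 else 0)"
      unfolding E'_def using deg_remove[OF fin eE] by blast
    have vls: "\<And>f' s v. vertex_label E (f'(e := s)) v = vertex_label E' f' v + (if v \<in> e then s else 0)"
      unfolding E'_def using vl_remove[OF fin eE] by blast
    have lab: "\<And>f' s. labeling E' f' \<Longrightarrow> (s = -1 \<or> s = 1) \<Longrightarrow> labeling E (f'(e := s))"
      unfolding labeling_def E'_def by auto
    define mx where "mx v = (if odd (degree E v) then 2 else (1::nat))" for v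
    have dec: "\<And>v w. (v,w) \<in> (adj_rel E)\<^sup>* \<Longrightarrow> (v,w) \<in> (adj_rel E')\<^sup>* \<or> (v,x) \<in> (adj_rel E')\<^sup>*
        \<or> (v,y) \<in> (adj_rel E')\<^sup>*"
      unfolding E'_def e_def by (rule reach_decomp)
    have Csub: "\<And>u v. {u,v} \<in> E' \<Longrightarrow> {u,v} \<in> E" unfolding E'_def by simp
    show ?thesis
    proof (cases "(x,y) \<in> (adj_rel E')\<^sup>*")
      case True
      define h' where "h' = h(x := h x - 1, y := mx y)"
      have "\<exists>f. labeling E' f \<and> (\<forall>v. \<bar>vertex_label E' f v\<bar> \<le> int (h' v))"
      proof (rule less.hyps[OF cardlt fin' simp'])
        show "\<forall>v. h' v \<le> 2"
        proof
          fix v show "h' v \<le> 2" using hle[rule_format, of v] hle[rule_format, of x]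
            by (auto simp add: h'_def mx_def)
        qed
        show "\<forall>v. odd (h' v) \<longleftrightarrow> odd (degree E' v)"
        proof
          fix v
          show "odd (h' v) \<longleftrightarrow> odd (degree E' v)"
            using hpar[rule_format, of v] degs[of v] xy(2,3) unfolding h'_def mx_def e_def
            by auto
        qed
        show "\<forall>u v. {u,v} \<in> E' \<longrightarrow> (\<exists>w. (u,w) \<in> (adj_rel E')\<^sup>* \<and> h' w > 0)"
        proof (intro allI impI)
          fix u v assume "{u,v} \<in> E'"
          then obtain w where w: "(u,w) \<in> (adj_rel E)\<^sup>*" "h w > 0" using C Csub by blast
          have hy: "h' y > 0" by (simp add: h'_def mx_def)
          from dec[OF w(1)] show "\<exists>w. (u,w) \<in> (adj_rel E')\<^sup>* \<and> h' w > 0"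
          proof (elim disjE)
            assume a: "(u,w) \<in> (adj_rel E')\<^sup>*"
            show ?thesis
            proof (cases "w = x")
              case True then show ?thesis using a \<open>(x,y) \<in> _\<close> hy by (meson rtrancl_trans)
            next
              case False
              then have "h' w > 0" using w(2) by (simp add: h'_def mx_def)
              then show ?thesis using a by blast
            qed
          next
            assume "(u,x) \<in> (adj_rel E')\<^sup>*"
            then show ?thesis using \<open>(x,y) \<in> _\<close> hy by (meson rtrancl_trans)
          next
            assume "(u,y) \<in> (adj_rel E')\<^sup>*"
            then show ?thesis using hy by blast
          qed
        qed
      qed
      then obtain f' where f': "labeling E' f'" "\<And>v. \<bar>vertex_label E' f' v\<bar> \<le> int (h' v)" by blast
      define s where "s = (if vertex_label E' f' y > 0 then -1 else (1::int))"
      show ?thesis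
      proof (intro exI conjI allI)
        show "labeling E (f'(e := s))" using lab f'(1) s_def by auto
        fix v
        show "\<bar>vertex_label E (f'(e := s)) v\<bar> \<le> int (h v)"
        proof -
          have pv: "even (vertex_label E' f' v) \<longleftrightarrow> even (degree E' v)"
            using vl_parity[OF fin' f'(1)] .
          consider "v = x" | "v = y" | "v \<noteq> x \<and> v \<noteq> y" by blast
          then show ?thesis
          proof cases
            case 1
            then show ?thesis using f'(2)[of v] xy vls[of f' s v] unfolding h'_def e_def s_def
              by auto
          next
            case 2
            have b: "\<bar>vertex_label E' f' y\<bar> \<le> int (mx y)" using f'(2)[of y] by (simp add: h'_def)
            define a where "a = vertex_label E' f' y"
            have ev: "even a \<longleftrightarrow> odd (h y)" using pv 2 hpar[rule_format, of y] degs[of y]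
              unfolding a_def e_def by auto
            have ba: "\<bar>a\<bar> \<le> (if odd (h y) then 2 else 1)" using b hpar[rule_format, of y]
              unfolding a_def mx_def by auto
            have hy: "h y = 0 \<or> h y = 1 \<or> h y = 2" using hle[rule_format, of y] by auto
            have eq: "vertex_label E (f'(e := s)) v = a + (if a > 0 then -1 else 1)"
              using vls[of f' s v] 2 unfolding a_def s_def e_def by simp
            have "\<bar>a + (if a > 0 then -1 else 1)\<bar> \<le> int (h y)"
              using hy
            proof (elim disjE)
              assume "h y = 0" then show ?thesis using ev ba by auto presburger
            next
              assume "h y = 1" then show ?thesis using ev ba by auto
            next
              assume "h y = 2" then show ?thesis using ev ba by auto
            qed
            then show ?thesis using eq 2 by simp
          next
            case 3
            then show ?thesis using f'(2)[of v] vls[of f' s v] unfolding h'_def e_def by auto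
          qed
        qed
      qed
    next
      case False
      define h' where "h' = h(x := mx x, y := mx y)"
      have "\<exists>f. labeling E' f \<and> (\<forall>v. \<bar>vertex_label E' f v\<bar> \<le> int (h' v))"
      proof (rule less.hyps[OF cardlt fin' simp'])
        show "\<forall>v. h' v \<le> 2"
        proof
          fix v show "h' v \<le> 2" using hle[rule_format, of v]
            by (auto simp add: h'_def mx_def)
        qed
        show "\<forall>v. odd (h' v) \<longleftrightarrow> odd (degree E' v)"
        proof
          fix v
          show "odd (h' v) \<longleftrightarrow> odd (degree E' v)"
            using hpar[rule_format, of v] degs[of v] xy(2,3) unfolding h'_def mx_def e_def
            by auto
        qed
        show "\<forall>u v. {u,v} \<in> E' \<longrightarrow> (\<exists>w. (u,w) \<in> (adj_rel E')\<^sup>* \<and> h' w > 0)"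
        proof (intro allI impI)
          fix u v assume "{u,v} \<in> E'"
          then obtain w where w: "(u,w) \<in> (adj_rel E)\<^sup>*" "h w > 0" using C Csub by blast
          have hy: "h' y > 0" "h' x > 0" by (auto simp add: h'_def mx_def)
          have hw: "h' w > 0" using w(2) hy by (auto simp add: h'_def mx_def)
          from dec[OF w(1)] show "\<exists>w. (u,w) \<in> (adj_rel E')\<^sup>* \<and> h' w > 0"
            using hy hw by blast
        qed
      qed
      then obtain f' where f': "labeling E' f'" "\<And>v. \<bar>vertex_label E' f' v\<bar> \<le> int (h' v)" by blast
      define R where "R = {v. (x,v) \<in> (adj_rel E')\<^sup>*}"
      have closed: "\<forall>u w. u \<in> R \<longrightarrow> {u,w} \<in> E' \<longrightarrow> w \<in> R"
        unfolding R_def adj_rel_def by (auto intro: rtrancl_into_rtrancl)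
      have xR: "x \<in> R" "y \<notin> R" using False unfolding R_def by auto
      define s where "s = (if vertex_label E' f' y > 0 then -1 else (1::int))"
      define t where "t = (vertex_label E' f' x * s > 0)"
      define g where "g = (if t then (\<lambda>e. if e \<subseteq> R then - f' e else f' e) else f')"
      have vlg: "\<And>v. vertex_label E' g v = (if t \<and> v \<in> R then - vertex_label E' f' v else vertex_label E' f' v)"
        unfolding g_def using flip_vl[OF simp' closed] by auto
      have labg: "labeling E' g" using f'(1) unfolding g_def labeling_def by auto
      show ?thesis
      proof (intro exI conjI allI)
        show "labeling E (g(e := s))" using lab labg s_def by auto
        fix v
        show "\<bar>vertex_label E (g(e := s)) v\<bar> \<le> int (h v)"
        proof -
          have pv: "even (vertex_label E' f' v) \<longleftrightarrow> even (degree E' v)"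
            using vl_parity[OF fin' f'(1)] .
          consider "v = x" | "v = y" | "v \<noteq> x \<and> v \<noteq> y" by blast
          then show ?thesis
          proof cases
            case 1
            define a where "a = vertex_label E' f' x"
            have b: "\<bar>a\<bar> \<le> int (mx x)" using f'(2)[of x] unfolding a_def by (simp add: h'_def xy(2))
            have ev: "even a \<longleftrightarrow> odd (h x)" using pv 1 hpar[rule_format, of x] degs[of x]
              unfolding a_def e_def by auto
            have ba: "\<bar>a\<bar> \<le> (if odd (h x) then 2 else 1)" using b hpar[rule_format, of x]
              unfolding mx_def by auto
            have hx: "h x = 1 \<or> h x = 2" using hle[rule_format, of x] xy(3) by auto
            have s1: "s = 1 \<or> s = -1" unfolding s_def by auto
            have eq: "vertex_label E (g(e := s)) v = (if t then - a else a) + s"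
              using vls[of g s v] 1 vlg[of x] xR unfolding a_def e_def by simp
            have tt: "t = (a * s > 0)" unfolding t_def a_def by simp
            have "\<bar>(if t then - a else a) + s\<bar> \<le> int (h x)"
              using hx
            proof (elim disjE)
              assume "h x = 1" then show ?thesis using ev ba s1 tt by auto
            next
              assume "h x = 2" then show ?thesis using ev ba s1 by auto
            qed
            then show ?thesis using eq 1 by simp
          next
            case 2
            have b: "\<bar>vertex_label E' f' y\<bar> \<le> int (mx y)" using f'(2)[of y] by (simp add: h'_def)
            define a where "a = vertex_label E' f' y"
            have ev: "even a \<longleftrightarrow> odd (h y)" using pv 2 hpar[rule_format, of y] degs[of y]
              unfolding a_def e_def by auto
            have ba: "\<bar>a\<bar> \<le> (if odd (h y) then 2 else 1)" using b hpar[rule_format, of y]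
              unfolding a_def mx_def by auto
            have hy: "h y = 0 \<or> h y = 1 \<or> h y = 2" using hle[rule_format, of y] by auto
            have eq: "vertex_label E (g(e := s)) v = a + (if a > 0 then -1 else 1)"
              using vls[of g s v] 2 vlg[of y] xR unfolding a_def s_def e_def by simp
            have "\<bar>a + (if a > 0 then -1 else 1)\<bar> \<le> int (h y)"
              using hy
            proof (elim disjE)
              assume "h y = 0" then show ?thesis using ev ba by auto presburger
            next
              assume "h y = 1" then show ?thesis using ev ba by auto
            next
              assume "h y = 2" then show ?thesis using ev ba by auto
            qed
            then show ?thesis using eq 2 by simp
          next
            case 3
            then show ?thesis using f'(2)[of v] vls[of g s v] vlg[of v] unfolding h'_def e_def by auto
          qed
        qed
      qed
    qed
  qed
qed


lemma sum_identity:
  assumes "simple_graph V E"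
  shows "(\<Sum>v\<in>V. vertex_label E f v) = 2 * (\<Sum>e\<in>E. f e)"
proof -
  have finV: "finite V" using assms by (simp add: simple_graph_def)
  have sub: "\<And>e. e \<in> E \<Longrightarrow> e \<subseteq> V \<and> card e = 2"
    using assms unfolding simple_graph_def by auto
  have "E \<subseteq> Pow V" using sub by auto
  then have finE: "finite E" using finV by (meson finite_Pow_iff finite_subset)
  have "(\<Sum>v\<in>V. vertex_label E f v) = (\<Sum>v\<in>V. \<Sum>e\<in>{e\<in>E. v \<in> e}. f e)"
    by (simp add: vertex_label_def incident_edges_def)
  also have "\<dots> = (\<Sum>e\<in>E. \<Sum>v\<in>{v\<in>V. v \<in> e}. f e)"
    by (rule sum.swap_restrict[OF finV finE])
  also have "\<dots> = (\<Sum>e\<in>E. 2 * f e)"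
  proof (rule sum.cong)
    fix e assume "e \<in> E"
    then have "{v\<in>V. v \<in> e} = e" "card e = 2" using sub by auto
    then show "(\<Sum>v\<in>{v\<in>V. v \<in> e}. f e) = 2 * f e" by simp
  qed simp
  finally show ?thesis by (simp add: sum_distrib_left)
qed

theorem theorem2:
  fixes V :: "'a set" and E :: "'a set set"
  assumes "simple_graph V E" and "connected_graph V E"
  shows "zero_M_cordial V E \<longleftrightarrow> (eulerian V E \<and> even (card E))"
proof -
  have finV: "finite V" using assms(1) by (simp add: simple_graph_def)
  have sub: "\<And>e. e \<in> E \<Longrightarrow> e \<subseteq> V" using assms(1) unfolding simple_graph_def by auto
  have "E \<subseteq> Pow V" using sub by auto
  then have finE: "finite E" using finV by (meson finite_Pow_iff finite_subset)
  have simpE: "\<forall>e\<in>E. \<exists>u w. e = {u,w} \<and> u \<noteq> w" using assms(1) unfolding simple_graph_def by blast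
  show ?thesis
  proof
    assume "zero_M_cordial V E"
    then obtain f where f: "labeling E f" "\<And>v. v \<in> V \<Longrightarrow> vertex_label E f v = 0"
      unfolding zero_M_cordial_def zero_M_cordial_labeling_def by blast
    have "eulerian V E" unfolding eulerian_def using vl_parity[OF finE f(1)] f(2) by fastforce
    moreover have "(\<Sum>e\<in>E. f e) = 0" using sum_identity[OF assms(1), of f] f(2) by simp
    then have "even (card E)" using pm1_sum_parity[OF finE, of f] f(1) unfolding labeling_def by auto
    ultimately show "eulerian V E \<and> even (card E)" by blast
  next
    assume A: "eulerian V E \<and> even (card E)"
    show "zero_M_cordial V E"
    proof (cases "V = {}")
      case True
      then show ?thesis unfolding zero_M_cordial_def zero_M_cordial_labeling_def labeling_def
        by (intro exI[of _ "\<lambda>_. 1"]) simp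
    next
      case False
      then obtain a where a: "a \<in> V" by blast
      define h where "h v = (if v = a then 2 else (0::nat))" for v
      have deg_out: "degree E v = 0" if "v \<notin> V" for v
      proof -
        have "{e\<in>E. v \<in> e} = {}" using sub that by blast
        then show ?thesis unfolding degree_def incident_edges_def by (simp only:) simp
      qed
      have "\<exists>f. labeling E f \<and> (\<forall>v. \<bar>vertex_label E f v\<bar> \<le> int (h v))"
      proof (rule main[OF finE simpE])
        show "\<forall>v. h v \<le> 2" by (simp add: h_def)
        show "\<forall>v. odd (h v) \<longleftrightarrow> odd (degree E v)"
        proof
          fix v show "odd (h v) \<longleftrightarrow> odd (degree E v)"
            using A deg_out[of v] unfolding eulerian_def h_def by (cases "v \<in> V") auto
        qed
        show "\<forall>u v. {u,v} \<in> E \<longrightarrow> (\<exists>w. (u,w) \<in> (adj_rel E)\<^sup>* \<and> h w > 0)"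
        proof (intro allI impI)
          fix u v assume "{u,v} \<in> E"
          then have "u \<in> V" using sub by auto
          then have "(u,a) \<in> (adj_rel E)\<^sup>*" using assms(2) a unfolding connected_graph_def by blast
          then show "\<exists>w. (u,w) \<in> (adj_rel E)\<^sup>* \<and> h w > 0" by (auto simp: h_def)
        qed
      qed
      then obtain f where f: "labeling E f" "\<And>v. \<bar>vertex_label E f v\<bar> \<le> int (h v)" by blast
      have z: "vertex_label E f v = 0" if "v \<noteq> a" for v
        using f(2)[of v] that by (simp add: h_def)
      have "(\<Sum>v\<in>V. vertex_label E f v) = vertex_label E f a"
        using z a finV by (simp add: sum.remove)
      then have va: "vertex_label E f a = 2 * (\<Sum>e\<in>E. f e)" using sum_identity[OF assms(1), of f] by simp
      have "even (\<Sum>e\<in>E. f e)" using pm1_sum_parity[OF finE, of f] f(1) A unfolding labeling_def by auto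
      then obtain k where "(\<Sum>e\<in>E. f e) = 2 * k" by blast
      moreover have "\<bar>vertex_label E f a\<bar> \<le> 2" using f(2)[of a] by (simp add: h_def)
      ultimately have "vertex_label E f a = 0" using va by auto
      then have "\<forall>v\<in>V. vertex_label E f v = 0" using z by metis
      then show ?thesis using f(1) unfolding zero_M_cordial_def zero_M_cordial_labeling_def by blast
    qed
  qed
qed

end
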